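(* Let $n\ge 3$, let ${\bf a}=(1)$, and let ${\bf b}=(\beta_1,\ldots,\beta_q)$, ${\bf c}=(\gamma_1,\ldots,\gamma_r)$ be sequences of positive integers with sums at most $n$, such that $2\le q\le r$. If $\mathcal T_{{\bf a},{\bf b},{\bf c}}$ has finitely many $G$-orbits, then ${\bf b}$ or ${\bf c}$ equals $(k,n-k)$ for some integer $k$.
   Context: $\mathbb F$ is an infinite field of characteristic $\ne 2$. Equip $\mathbb F^{2n}$ (canonical basis $e_1,\ldots,e_{2n}$) with the symmetric bilinear form $(e_i,e_j)=\delta_{i,2n+1-j}$, and let $G={\rm O}_{2n}(\mathbb F)$ be its isometry group. A subspace $V$ is isotropic if $(V,V)=\{0\}$. For a sequence ${\bf a}=(\alpha_1,\ldots,\alpha_p)$ of positive integers with $\sum\alpha_j\le n$, $M_{\bf a}$ is the set of flags $V_1\subset\cdots\subset V_p$ in $\mathbb F^{2n}$ with $\dim V_j=\alpha_1+\cdots+\alpha_j$ and $V_p$ isotropic. $\mathcal T_{{\bf a},{\bf b},{\bf c}}=M_{\bf a}\times M_{\bf b}\times M_{\bf c}$ with the diagonal $G$-action. *)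

theory Defs
  imports Complex_Main "HOL-Library.Function_Algebras"
begin

text \<open>Vectors of F^(2n) are represented as functions nat => F vanishing from index 2n on;
  coordinate i (0-based) corresponds to the basis vector e_(i+1).\<close>

definition fscale :: "'a::field \<Rightarrow> (nat \<Rightarrow> 'a) \<Rightarrow> (nat \<Rightarrow> 'a)" where
  "fscale c v = (\<lambda>i. c * v i)"

global_interpretation fvs: vector_space "fscale :: 'a::field \<Rightarrow> (nat \<Rightarrow> 'a) \<Rightarrow> (nat \<Rightarrow> 'a)"
  by unfold_locales (auto simp: fscale_def algebra_simps)

definition amb :: "nat \<Rightarrow> (nat \<Rightarrow> 'a::field) set" where
  "amb n = {v. \<forall>i\<ge>2*n. v i = 0}"

text \<open>The symmetric bilinear form (e_i, e_j) = delta_(i, 2n+1-j).\<close>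
definition bform :: "nat \<Rightarrow> (nat \<Rightarrow> 'a::field) \<Rightarrow> (nat \<Rightarrow> 'a) \<Rightarrow> 'a" where
  "bform n u v = (\<Sum>i<2*n. u i * v (2*n - 1 - i))"

definition isotropic :: "nat \<Rightarrow> (nat \<Rightarrow> 'a::field) set \<Rightarrow> bool" where
  "isotropic n W \<longleftrightarrow> (\<forall>u\<in>W. \<forall>v\<in>W. bform n u v = 0)"

text \<open>The orthogonal group O_(2n)(F): linear bijections of F^(2n) preserving the form
  (represented by functions whose behaviour outside F^(2n) is irrelevant).\<close>
definition orth_group :: "nat \<Rightarrow> ((nat \<Rightarrow> 'a::field) \<Rightarrow> (nat \<Rightarrow> 'a)) set" where
  "orth_group n = {g.
     (\<forall>u\<in>amb n. \<forall>v\<in>amb n. g (u + v) = g u + g v) \<and>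
     (\<forall>c. \<forall>u\<in>amb n. g (fscale c u) = fscale c (g u)) \<and>
     bij_betw g (amb n) (amb n) \<and>
     (\<forall>u\<in>amb n. \<forall>v\<in>amb n. bform n (g u) (g v) = bform n u v)}"

definition flags :: "nat \<Rightarrow> nat list \<Rightarrow> (nat \<Rightarrow> 'a::field) set list set" where
  "flags n a = {Vs. length Vs = length a \<and>
     (\<forall>j<length a. fvs.subspace (Vs ! j) \<and> Vs ! j \<subseteq> amb n \<and>
                   fvs.dim (Vs ! j) = sum_list (take (Suc j) a)) \<and>
     (\<forall>j. Suc j < length a \<longrightarrow> Vs ! j \<subseteq> Vs ! Suc j) \<and>
     (Vs \<noteq> [] \<longrightarrow> isotropic n (last Vs))}"

definition act_flag :: "((nat \<Rightarrow> 'a) \<Rightarrow> (nat \<Rightarrow> 'a)) \<Rightarrow> (nat \<Rightarrow> 'a) set list \<Rightarrow> (nat \<Rightarrow> 'a) set list" where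
  "act_flag g Vs = map (\<lambda>V. g ` V) Vs"

definition triple_orbits :: "nat \<Rightarrow> nat list \<Rightarrow> nat list \<Rightarrow> nat list
    \<Rightarrow> ((nat \<Rightarrow> 'a::field) set list \<times> (nat \<Rightarrow> 'a) set list \<times> (nat \<Rightarrow> 'a) set list) set set" where
  "triple_orbits n a b c =
     {{(act_flag g x, act_flag g y, act_flag g z) | g. g \<in> orth_group n} | x y z.
        x \<in> flags n a \<and> y \<in> flags n b \<and> z \<in> flags n c}"

end

theory Submission
  imports Defs
begin

definition ev :: "nat \<Rightarrow> nat \<Rightarrow> 'a::field" where
  "ev k = (\<lambda>i. if i = k then 1 else 0)"

lemma supp_subspace: "fvs.subspace {x :: nat \<Rightarrow> 'a::field. \<forall>i\<in>T. x i = 0}"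
  unfolding fvs.subspace_def by (auto simp: fscale_def)

lemma amb_subspace: "fvs.subspace (amb n :: (nat \<Rightarrow> 'a::field) set)"
  unfolding fvs.subspace_def amb_def by (auto simp: fscale_def)

lemma span_ev_supp:
  assumes "x \<in> fvs.span (ev ` S :: (nat \<Rightarrow> 'a::field) set)" "i \<notin> S"
  shows "x i = 0"
proof -
  have "fvs.span (ev ` S :: (nat \<Rightarrow> 'a) set) \<subseteq> {x. \<forall>i\<in>-S. x i = 0}"
    by (rule fvs.span_minimal) (auto simp: ev_def supp_subspace)
  then show ?thesis using assms by auto
qed

lemma indep_ev: "fvs.independent (ev ` S :: (nat \<Rightarrow> 'a::field) set)"
proof
  assume "fvs.dependent (ev ` S :: (nat \<Rightarrow> 'a) set)"
  then obtain k where k: "k \<in> S" "(ev k :: nat \<Rightarrow> 'a) \<in> fvs.span (ev ` S - {ev k})"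
    unfolding fvs.dependent_def by auto
  have "ev ` S - {ev k} \<subseteq> (ev ` (S - {k}) :: (nat \<Rightarrow> 'a) set)" by auto
  then have "(ev k :: nat \<Rightarrow> 'a) \<in> fvs.span (ev ` (S - {k}))"
    using k(2) fvs.span_mono by blast
  from span_ev_supp[OF this] have "(ev k :: nat \<Rightarrow> 'a) k = 0" by simp
  then show False by (simp add: ev_def)
qed

lemma inj_ev: "inj (ev :: nat \<Rightarrow> nat \<Rightarrow> 'a::field)"
proof
  fix x y assume "(ev x :: nat \<Rightarrow> 'a) = ev y"
  then have "(ev x :: nat \<Rightarrow> 'a) x = ev y x" by simp
  then show "x = y" by (simp add: ev_def split: if_splits)
qed

lemma dim_span_ev: "fvs.dim (fvs.span (ev ` S :: (nat \<Rightarrow> 'a::field) set)) = card S"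
  using fvs.dim_span_eq_card_independent[OF indep_ev] card_image[OF inj_on_subset[OF inj_ev]]
  by (metis subset_UNIV)

lemma span_ev_amb:
  assumes "S \<subseteq> {..<2*n}"
  shows "fvs.span (ev ` S :: (nat \<Rightarrow> 'a::field) set) \<subseteq> amb n"
  by (rule fvs.span_minimal) (use assms amb_subspace in \<open>auto simp: ev_def amb_def\<close>)

lemma bform_supp:
  assumes "S \<subseteq> {..<2*n}" "\<And>i. i < 2*n \<Longrightarrow> i \<notin> S \<Longrightarrow> u i * v (2*n-1-i) = 0"
  shows "bform n u v = (\<Sum>i\<in>S. u i * v (2*n-1-i))"
  unfolding bform_def
  by (rule sum.mono_neutral_left[symmetric]) (use assms in auto)

lemma bform_sym: "bform n u v = bform n v u"
  unfolding bform_def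
  by (rule sum.reindex_bij_witness[where i="\<lambda>i. 2*n-1-i" and j="\<lambda>i. 2*n-1-i"]) auto

lemma bform_ev_right: "k < 2*n \<Longrightarrow> bform n u (ev k) = u (2*n-1-k)"
  by (subst bform_supp[where S="{2*n-1-k}"]) (auto simp: ev_def)

lemma bform_fscale_left: "bform n (fscale c u) v = c * bform n u v"
  unfolding bform_def fscale_def by (simp add: sum_distrib_left mult.assoc)

lemma bform_fscale_right: "bform n u (fscale c v) = c * bform n u v"
  using bform_fscale_left bform_sym by metis

lemma isotropic_ev:
  assumes "\<And>i. i \<in> S \<Longrightarrow> 2*n-1-i \<notin> S"
  shows "isotropic n (fvs.span (ev ` S :: (nat \<Rightarrow> 'a::field) set))"
  unfolding isotropic_def bform_def
proof (intro ballI sum.neutral)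
  fix u v i assume u: "u \<in> fvs.span (ev ` S :: (nat \<Rightarrow> 'a) set)" and v: "v \<in> fvs.span (ev ` S :: (nat \<Rightarrow> 'a) set)"
  show "u i * v (2*n-1-i) = 0"
  proof (cases "i \<in> S")
    case True then show ?thesis using span_ev_supp[OF v] assms by simp
  next
    case False then show ?thesis using span_ev_supp[OF u] by simp
  qed
qed

definition lvec :: "nat \<Rightarrow> nat \<Rightarrow> 'a::field \<Rightarrow> nat \<Rightarrow> 'a" where
  "lvec n a t = (\<lambda>i. if i = 0 then t else if i = 2*n-1 then 1 else if i = a then 1
     else if i = 2*n-1-a then 1 else if i = n-1 then 1 else if i = n then -1-t else 0)"

lemma lvec_nz:
  assumes "i < 2*n" "lvec n a t (2*n-1-i) \<noteq> 0"
  shows "i = 0 \<or> i = 2*n-1 \<or> i = a \<or> i = 2*n-1-a \<or> i = n-1 \<or> i = n"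
  using assms unfolding lvec_def by (auto split: if_splits)

lemma core:
  fixes u v w z l :: "nat \<Rightarrow> 'a::field"
  assumes n: "n \<ge> 3" and a: "1 \<le> a" "a < d" "d \<le> n-1"
    and u: "\<And>i. i \<ge> a \<Longrightarrow> u i = 0"
    and v: "\<And>i. i \<ge> d \<Longrightarrow> v i = 0"
    and w: "w 0 = 0" "w a = 0" "w (n-1) = 0" "w (2*n-1-a) = 0" "\<And>k. k \<ge> n \<Longrightarrow> k \<noteq> 2*n-1 \<Longrightarrow> w k = 0"
    and z: "z 0 = 0" "z a = 0" "z (n-1) = 0" "\<And>k. k \<ge> n \<Longrightarrow> k \<noteq> 2*n-1 \<Longrightarrow> k \<noteq> 2*n-1-a \<Longrightarrow> z k = 0"
    and l: "l = fscale c (lvec n a t)"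
    and e1: "bform n u w = 1" and e2: "bform n v w = 0" and e3: "bform n u z = 0"
    and e4: "bform n v z = 1"
    and e5: "bform n l v * bform n l z \<noteq> 0"
    and e6: "bform n l u * bform n l w = s * (bform n l v * bform n l z)"
  shows "s = t"
proof -
  have f1: "bform n u w = u 0 * w (2*n-1)"
  proof (subst bform_supp[where S="{0}"])
    fix i assume i: "i < 2*n" "i \<notin> {0}"
    show "u i * w (2 * n - 1 - i) = 0"
    proof (cases "i \<ge> a")
      case True then show ?thesis using u by simp
    next
      case False
      then show ?thesis using w(5)[of "2*n-1-i"] i n a by auto
    qed
  qed (use n in auto)
  have f2: "bform n v w = v 0 * w (2*n-1)"
  proof (subst bform_supp[where S="{0}"])
    fix i assume i: "i < 2*n" "i \<notin> {0}"
    show "v i * w (2 * n - 1 - i) = 0"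
    proof (cases "i \<ge> d")
      case True then show ?thesis using v by simp
    next
      case False
      then show ?thesis using w(4) w(5)[of "2*n-1-i"] i n a by (cases "i = a") auto
    qed
  qed (use n in auto)
  have f3: "bform n u z = u 0 * z (2*n-1)"
  proof (subst bform_supp[where S="{0}"])
    fix i assume i: "i < 2*n" "i \<notin> {0}"
    show "u i * z (2 * n - 1 - i) = 0"
    proof (cases "i \<ge> a")
      case True then show ?thesis using u by simp
    next
      case False
      then show ?thesis using z(4)[of "2*n-1-i"] i n a by auto
    qed
  qed (use n in auto)
  have f4: "bform n v z = v 0 * z (2*n-1) + v a * z (2*n-1-a)"
  proof (subst bform_supp[where S="{0,a}"])
    fix i assume i: "i < 2*n" "i \<notin> {0,a}"
    show "v i * z (2 * n - 1 - i) = 0"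
    proof (cases "i \<ge> d")
      case True then show ?thesis using v by simp
    next
      case False
      then have "n \<le> 2*n-1-i" "2*n-1-i \<noteq> 2*n-1" "2*n-1-i \<noteq> 2*n-1-a" using i n a by auto
      then show ?thesis using z(4)[of "2*n-1-i"] by simp
    qed
  qed (use n a in auto)
  have g1: "bform n u (lvec n a t) = u 0"
    by (subst bform_supp[where S="{0}"]) (use n a u in \<open>auto simp: lvec_def\<close>)
  have g2: "bform n v (lvec n a t) = v 0 + v a"
    by (subst bform_supp[where S="{0,a}"]) (use n a v in \<open>auto simp: lvec_def\<close>)
  have g3: "bform n w (lvec n a t) = w (2*n-1) * t"
  proof (subst bform_supp[where S="{2*n-1}"])
    fix i assume i: "i < 2*n" "i \<notin> {2*n-1}"
    show "w i * lvec n a t (2 * n - 1 - i) = 0"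
    proof (cases "lvec n a t (2 * n - 1 - i) = 0")
      case False
      then have "i = 0 \<or> i = a \<or> i = 2*n-1-a \<or> i = n-1 \<or> i = n" using lvec_nz[OF i(1) False] i by auto
      then show ?thesis using w(1-4) w(5)[of n] n by auto
    qed simp
  qed (use n a in \<open>auto simp: lvec_def\<close>)
  have g4: "bform n z (lvec n a t) = z (2*n-1) * t + z (2*n-1-a)"
  proof (subst bform_supp[where S="{2*n-1, 2*n-1-a}"])
    fix i assume i: "i < 2*n" "i \<notin> {2*n-1, 2*n-1-a}"
    show "z i * lvec n a t (2 * n - 1 - i) = 0"
    proof (cases "lvec n a t (2 * n - 1 - i) = 0")
      case False
      then have "i = 0 \<or> i = a \<or> i = n-1 \<or> i = n" using lvec_nz[OF i(1) False] i by auto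
      then show ?thesis using z(1-3) z(4)[of n] n a by auto
    qed simp
  qed (use n a in \<open>auto simp: lvec_def\<close>)
  have lx: "bform n l x = c * bform n x (lvec n a t)" for x
    using l bform_fscale_left bform_sym by metis
  have h1: "u 0 * w (2*n-1) = 1" using e1 f1 by simp
  have h2: "v 0 = 0" using e2 f2 h1 by auto
  have h3: "z (2*n-1) = 0" using e3 f3 h1 by auto
  have h4: "v a * z (2*n-1-a) = 1" using e4 f4 h2 h3 by simp
  have "bform n l v * bform n l z = c * c" using lx g2 g4 h2 h3 h4
    by (simp add: algebra_simps)
  moreover have "bform n l u * bform n l w = c * c * t" using lx g1 g3 h1
    by (simp add: algebra_simps)
  ultimately show ?thesis using e5 e6 by simp
qed

definition flag_of :: "(nat \<Rightarrow> nat set) \<Rightarrow> nat \<Rightarrow> (nat \<Rightarrow> 'a::field) set list" where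
  "flag_of S len = map (\<lambda>j. fvs.span (ev ` S j)) [0..<len]"

lemma flag_of_nth: "j < len \<Longrightarrow> flag_of S len ! j = fvs.span (ev ` S j)"
  unfolding flag_of_def by simp

lemma flag_of_in:
  assumes "len = length a"
    and "\<And>j. j < len \<Longrightarrow> S j \<subseteq> {..<2*n} \<and> card (S j) = sum_list (take (Suc j) a)"
    and "\<And>j. Suc j < len \<Longrightarrow> S j \<subseteq> S (Suc j)"
    and "len > 0 \<Longrightarrow> (\<forall>i\<in>S (len-1). 2*n-1-i \<notin> S (len-1))"
  shows "(flag_of S len :: (nat \<Rightarrow> 'a::field) set list) \<in> flags n a"
  unfolding flags_def
proof (intro CollectI conjI allI impI)
  show "length (flag_of S len :: (nat \<Rightarrow> 'a) set list) = length a" using assms(1) by (simp add: flag_of_def)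
next
  fix j assume j: "j < length a"
  then have j': "j < len" using assms(1) by simp
  show "fvs.subspace ((flag_of S len :: (nat \<Rightarrow> 'a) set list) ! j)"
    using j' by (simp add: flag_of_nth)
  show "(flag_of S len :: (nat \<Rightarrow> 'a) set list) ! j \<subseteq> amb n"
    using j' assms(2)[OF j'] by (simp add: flag_of_nth span_ev_amb)
  show "fvs.dim ((flag_of S len :: (nat \<Rightarrow> 'a) set list) ! j) = sum_list (take (Suc j) a)"
    using j' assms(2)[OF j'] dim_span_ev[where S="S j"] by (simp add: flag_of_nth)
next
  fix j assume j: "Suc j < length a"
  then show "(flag_of S len :: (nat \<Rightarrow> 'a) set list) ! j \<subseteq> flag_of S len ! Suc j"
    using assms(1) assms(3)[of j] by (simp add: flag_of_nth fvs.span_mono image_mono)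
next
  assume ne: "(flag_of S len :: (nat \<Rightarrow> 'a) set list) \<noteq> []"
  then have l: "len > 0" by (simp add: flag_of_def)
  then have "last (flag_of S len :: (nat \<Rightarrow> 'a) set list) = fvs.span (ev ` S (len - 1))"
    using ne by (simp add: last_conv_nth flag_of_def)
  then show "isotropic n (last (flag_of S len :: (nat \<Rightarrow> 'a) set list))"
    using isotropic_ev assms(4)[OF l] by metis
qed

lemma lvec_amb:
  assumes "n \<ge> 3" "1 \<le> a" "a \<le> n-2"
  shows "lvec n a t \<in> amb n"
  using assms unfolding amb_def lvec_def by auto

lemma lvec_vals:
  assumes "n \<ge> 3" "1 \<le> a" "a \<le> n-2"
  shows "lvec n a t 0 = t" "lvec n a t (2*n-1) = 1" "lvec n a t a = 1"
    "lvec n a t (2*n-1-a) = 1" "lvec n a t (n-1) = 1" "lvec n a t n = -1-t"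
  using assms unfolding lvec_def by auto

lemma lvec_iso:
  assumes "n \<ge> 3" "1 \<le> a" "a \<le> n-2"
  shows "bform n (lvec n a t) (lvec n a (t::'a::field)) = 0"
proof -
  have "bform n (lvec n a t) (lvec n a t) =
     (\<Sum>i\<in>{0, 2*n-1, a, 2*n-1-a, n-1, n}. lvec n a t i * lvec n a t (2*n-1-i))"
  proof (rule bform_supp)
    fix i assume i: "i < 2*n" "i \<notin> {0, 2*n-1, a, 2*n-1-a, n-1, n}"
    then have "lvec n a t i = 0" unfolding lvec_def by auto
    then show "lvec n a t i * lvec n a t (2*n-1-i) = 0" by simp
  qed (use assms in auto)
  also have "\<dots> = t * 1 + (1 * t + (1 * 1 + (1 * 1 + (1 * (-1-t) + (-1-t) * 1))))"
  proof -
    have d: "0 \<notin> {2*n-1, a, 2*n-1-a, n-1, n}" "2*n-1 \<notin> {a, 2*n-1-a, n-1, n}"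
      "a \<notin> {2*n-1-a, n-1, n}" "2*n-1-a \<notin> {n-1, n}" "n-1 \<notin> {n}"
      using assms by auto
    have p: "2*n-1-(2*n-1) = (0::nat)" "2*n-1-(2*n-1-a) = a" "2*n-1-(n-1) = n" "2*n-1-n = n-1"
      using assms by auto
    have v: "lvec n a t 0 = t" "lvec n a t (2*n-1) = 1" "lvec n a t a = 1"
    "lvec n a t (2*n-1-a) = 1" "lvec n a t (n-1) = 1" "lvec n a t n = -1-t" using lvec_vals[OF assms] by auto
    show ?thesis
      apply (subst sum.insert, simp, use d in blast)+
      apply (simp only: sum.empty p v diff_zero)
      apply simp
      done
  qed
  also have "\<dots> = 0" by simp
  finally show ?thesis .
qed

lemma lvec_flag:
  assumes "n \<ge> 3" "1 \<le> a" "a \<le> n-2"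
  shows "[fvs.span {lvec n a (t::'a::field)}] \<in> flags n [1]"
  unfolding flags_def
proof (intro CollectI conjI allI impI)
  have ne: "lvec n a t \<noteq> 0"
  proof
    assume "lvec n a t = 0"
    then have "lvec n a t (2*n-1) = 0" by simp
    then show False using assms by (simp add: lvec_def)
  qed
  fix j assume j: "j < length [1::nat]"
  then show "fvs.subspace ([fvs.span {lvec n a t}] ! j)" by simp
  have "fvs.span {lvec n a t} \<subseteq> amb n"
    by (rule fvs.span_minimal) (use lvec_amb[OF assms] amb_subspace in auto)
  then show "[fvs.span {lvec n a t}] ! j \<subseteq> amb n"
    using j by auto
  show "fvs.dim ([fvs.span {lvec n a t}] ! j) = sum_list (take (Suc j) [1])"
    using j ne fvs.dim_span_eq_card_independent[of "{lvec n a t}"] by simp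
next
  show "isotropic n (last [fvs.span {lvec n a t}])"
    unfolding isotropic_def fvs.span_singleton
    using lvec_iso[OF assms] by (auto simp: bform_fscale_left bform_fscale_right)
qed simp_all

lemma sum_take_mono:
  assumes "j \<le> k" shows "sum_list (take j (xs::nat list)) \<le> sum_list (take k xs)"
proof -
  have "take k xs = take j (take k xs) @ drop j (take k xs)" by (rule append_take_drop_id[symmetric])
  then have "sum_list (take k xs) = sum_list (take j (take k xs)) + sum_list (drop j (take k xs))"
    by (metis sum_list_append)
  moreover have "take j (take k xs) = take j xs" using assms by (simp add: min_def)
  ultimately show ?thesis by simp
qed

lemma sum_take_le: "sum_list (take j (xs::nat list)) \<le> sum_list xs"
  using sum_take_mono[of j "length xs" xs] by (cases "j \<le> length xs") auto

lemma sum_take_Suc: "j < length xs \<Longrightarrow> sum_list (take (Suc j) (xs::nat list)) = sum_list (take j xs) + xs ! j"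
  by (simp add: take_Suc_conv_app_nth)

definition PL1 :: "nat \<Rightarrow> nat \<Rightarrow> nat list" where
  "PL1 n a = [1..<a] @ [Suc a..<n-1]"

definition PL :: "nat \<Rightarrow> nat \<Rightarrow> nat list" where
  "PL n a = PL1 n a @ [n-1]"

lemma PL1_props:
  assumes "1 \<le> a" "a \<le> n-2" "n \<ge> 3"
  shows "set (PL1 n a) = {1..<n-1} - {a}" "length (PL1 n a) = n - 3" "distinct (PL1 n a)"
proof -
  show "set (PL1 n a) = {1..<n-1} - {a}"
    unfolding PL1_def using assms by auto
  show "length (PL1 n a) = n - 3" unfolding PL1_def using assms by simp
  show "distinct (PL1 n a)" unfolding PL1_def using assms by auto
qed

lemma PL_props:
  assumes "1 \<le> a" "a \<le> n-2" "n \<ge> 3"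
  shows "set (PL n a) = {1..<n} - {a}" "length (PL n a) = n - 2" "distinct (PL n a)"
proof -
  note p = PL1_props[OF assms]
  show "set (PL n a) = {1..<n} - {a}" unfolding PL_def using p(1) assms
    apply -
    apply (rule set_eqI)
    apply (simp only: set_append Un_iff atLeastLessThan_iff Diff_iff set_simps insert_iff empty_iff)
    apply (intro iffI; elim disjE conjE; (intro conjI)?; simp?; arith?)
    done
  show "length (PL n a) = n - 2" unfolding PL_def using p(2) assms by simp
  show "distinct (PL n a)" unfolding PL_def using p(1,3) assms by auto
qed

lemma card_take_PL:
  assumes "1 \<le> a" "a \<le> n-2" "n \<ge> 3" "k \<le> n-2"
  shows "card (set (take k (PL n a))) = k"
  using PL_props[OF assms(1-3)] assms(4) by (simp add: distinct_card)

lemma take_PL_small: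
  assumes "1 \<le> a" "a \<le> n-2" "n \<ge> 3" "k \<le> n-3"
  shows "set (take k (PL n a)) \<subseteq> {1..<n-1} - {a}"
proof -
  have "take k (PL n a) = take k (PL1 n a)"
    using PL1_props[OF assms(1-3)] assms(4) unfolding PL_def by simp
  then show ?thesis using PL1_props[OF assms(1-3)] set_take_subset by metis
qed

lemma take_PL_sub:
  assumes "1 \<le> a" "a \<le> n-2" "n \<ge> 3"
  shows "set (take k (PL n a)) \<subseteq> {1..<n} - {a}"
  using PL_props[OF assms] set_take_subset by metis

definition SC :: "nat \<Rightarrow> nat \<Rightarrow> nat list \<Rightarrow> nat \<Rightarrow> nat set" where
  "SC n a c j = (if j = 0 then insert (2*n-1) (set (take (c!0 - 1) (PL n a)))
      else insert (2*n-1) (insert (2*n-1-a) (set (take (sum_list (take (Suc j) c) - 2) (PL n a)))))"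

lemma two_elems: "length xs \<ge> 2 \<Longrightarrow> \<exists>x y zs. xs = x # y # zs"
  by (cases xs; cases "tl xs") auto

lemma key_bound:
  fixes xs :: "nat list"
  assumes "xs = x # y # zs" "\<forall>v\<in>set xs. v > 0" "sum_list xs \<le> n" "xs \<noteq> [x, n - x]"
  shows "x + y \<le> n - 1"
proof (cases zs)
  case Nil then show ?thesis using assms by auto
next
  case (Cons w ws)
  then have "w > 0" using assms by auto
  then show ?thesis using assms Cons by auto
qed

lemma ev_amb: "k < 2*n \<Longrightarrow> (ev k :: nat \<Rightarrow> 'a::field) \<in> amb n"
  unfolding amb_def ev_def by auto

lemma id_orth: "id \<in> orth_group n"
  unfolding orth_group_def by (simp add: bij_betw_id)

lemma act_id: "act_flag id X = X"
  unfolding act_flag_def by simp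

lemma act_nth: "act_flag g X = Y \<Longrightarrow> j < length X \<Longrightarrow> g ` (X ! j) = Y ! j"
  unfolding act_flag_def by auto

theorem proposition1p4:
  fixes n :: nat and b c :: "nat list"
  assumes "infinite (UNIV :: 'a::field set)"
    and "(2::'a) \<noteq> 0"
    and "n \<ge> 3"
    and "\<forall>x\<in>set b. x > 0" and "\<forall>x\<in>set c. x > 0"
    and "sum_list b \<le> n" and "sum_list c \<le> n"
    and "2 \<le> length b" and "length b \<le> length c"
    and "finite (triple_orbits n [1] b c :: ((nat \<Rightarrow> 'a) set list \<times> _ \<times> _) set set)"
  shows "\<exists>k. b = [k, n - k] \<or> c = [k, n - k]"
proof (rule ccontr)
  assume neg: "\<not> (\<exists>k. b = [k, n - k] \<or> c = [k, n - k])"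
  have n: "n \<ge> 3" by fact
  obtain b0 b1 br where bd: "b = b0 # b1 # br" using two_elems assms(8) by blast
  have "2 \<le> length c" using assms(8,9) by linarith
  then obtain c0 c1 cr where cd: "c = c0 # c1 # cr" using two_elems by blast
  have bb: "b0 + b1 \<le> n - 1" using key_bound[OF bd assms(4) assms(6)] neg by blast
  have cb: "c0 + c1 \<le> n - 1" using key_bound[OF cd assms(5) assms(7)] neg by blast
  have bne: "b \<noteq> []" "c \<noteq> []" using bd cd by auto
  have pos: "b0 > 0" "b1 > 0" "c0 > 0" "c1 > 0" using assms(4,5) bd cd by auto
  define a where "a = b0"
  define d where "d = b0 + b1"
  have a: "1 \<le> a" "a < d" "d \<le> n - 1" "a \<le> n - 2" using pos bb by (auto simp: a_def d_def)
  define pb where "pb j = sum_list (take (Suc j) b)" for j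
  define pc where "pc j = sum_list (take (Suc j) c)" for j
  have pb0: "pb 0 = a" "pb 1 = d" by (simp_all add: pb_def bd a_def d_def)
  have pc0: "pc 0 = c0" "pc 1 = c0 + c1" by (simp_all add: pc_def cd)
  have pbn: "pb j \<le> n" for j using sum_take_le[of "Suc j" b] assms(6) by (simp add: pb_def)
  have pcn: "pc j \<le> n" for j using sum_take_le[of "Suc j" c] assms(7) by (simp add: pc_def)
  have pcm: "j \<le> k \<Longrightarrow> pc j \<le> pc k" for j k using sum_take_mono[of "Suc j" "Suc k" c] by (simp add: pc_def)
  have pbm: "j \<le> k \<Longrightarrow> pb j \<le> pb k" for j k using sum_take_mono[of "Suc j" "Suc k" b] by (simp add: pb_def)

  define yB :: "(nat \<Rightarrow> 'a) set list" where "yB = flag_of (\<lambda>j. {..<pb j}) (length b)"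
  define zC :: "(nat \<Rightarrow> 'a) set list" where "zC = flag_of (SC n a c) (length c)"
  define xL :: "'a \<Rightarrow> (nat \<Rightarrow> 'a) set list" where "xL t = [fvs.span {lvec n a t}]" for t

  have yB: "yB \<in> flags n b" unfolding yB_def
  proof (rule flag_of_in)
    fix j assume "j < length b"
    show "{..<pb j} \<subseteq> {..<2*n} \<and> card {..<pb j} = sum_list (take (Suc j) b)"
      using pbn[of j] by (auto simp: pb_def)
  next
    fix j assume "Suc j < length b"
    show "{..<pb j} \<subseteq> {..<pb (Suc j)}" using pbm[of j "Suc j"] by auto
  next
    show "\<forall>i\<in>{..<pb (length b - 1)}. 2*n-1-i \<notin> {..<pb (length b - 1)}"
      using pbn[of "length b - 1"] by auto
  qed simp

  note PLp = PL_props[OF a(1) a(4) n]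
  have SCsub: "SC n a c j \<subseteq> {2*n-1, 2*n-1-a} \<union> ({1..<n} - {a})" for j
    using take_PL_sub[OF a(1) a(4) n] unfolding SC_def by auto
  have "c0 - 1 \<le> n - 3" using cb pos by linarith
  note tt = take_PL_small[OF a(1) a(4) n this]
  have SC0: "SC n a c 0 \<subseteq> insert (2*n-1) ({1..<n-1} - {a})"
    using tt cd unfolding SC_def by auto
  have "c0 + c1 - 2 \<le> n - 3" using cb pos by linarith
  note tt1 = take_PL_small[OF a(1) a(4) n this]
  have "SC n a c 1 = {2*n-1, 2*n-1-a} \<union> set (take (c0 + c1 - 2) (PL n a))"
    unfolding SC_def using cd by simp
  then have SC1: "SC n a c 1 \<subseteq> {2*n-1, 2*n-1-a} \<union> ({1..<n-1} - {a})"
    using tt1 by auto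

  have zC: "zC \<in> flags n c" unfolding zC_def
  proof (rule flag_of_in)
    fix j assume j: "j < length c"
    have "SC n a c j \<subseteq> {..<2*n}" using SCsub[of j] n by auto
    moreover have "card (SC n a c j) = sum_list (take (Suc j) c)"
    proof (cases "j = 0")
      case True
      have "card (set (take (c0 - 1) (PL n a))) = c0 - 1"
        using card_take_PL[OF a(1) a(4) n] cb by simp
      moreover have "2*n-1 \<notin> set (take (c0 - 1) (PL n a))"
        using take_PL_sub[OF a(1) a(4) n, of "c0 - 1"] n by fastforce
      ultimately show ?thesis using True pos cd by (simp add: SC_def)
    next
      case False
      have ge: "pc j \<ge> 2" using pcm[of 1 j] pc0 pos False by auto
      have "card (set (take (pc j - 2) (PL n a))) = pc j - 2"
        using card_take_PL[OF a(1) a(4) n] pcn[of j] by simp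
      moreover have "2*n-1 \<notin> set (take (pc j - 2) (PL n a))" "2*n-1-a \<notin> set (take (pc j - 2) (PL n a))"
        using take_PL_sub[OF a(1) a(4) n, of "pc j - 2"] n a by fastforce+
      moreover have "2*n-1 \<noteq> 2*n-1-a" using a n by auto
      ultimately show ?thesis using False ge by (simp add: SC_def pc_def)
    qed
    ultimately show "SC n a c j \<subseteq> {..<2*n} \<and> card (SC n a c j) = sum_list (take (Suc j) c)" by simp
  next
    fix j assume j: "Suc j < length c"
    show "SC n a c j \<subseteq> SC n a c (Suc j)"
    proof (cases "j = 0")
      case True
      have "set (take (c0 - 1) (PL n a)) \<subseteq> set (take (pc 1 - 2) (PL n a))"
        by (rule set_take_subset_set_take) (use pc0 pos in auto)
      then show ?thesis using True cd by (auto simp: SC_def pc_def)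
    next
      case False
      have "set (take (pc j - 2) (PL n a)) \<subseteq> set (take (pc (Suc j) - 2) (PL n a))"
        by (rule set_take_subset_set_take) (use pcm[of j "Suc j"] in auto)
      then show ?thesis using False by (auto simp: SC_def pc_def)
    qed
  next
    show "\<forall>i\<in>SC n a c (length c - 1). 2*n-1-i \<notin> SC n a c (length c - 1)"
    proof
      fix i assume "i \<in> SC n a c (length c - 1)"
      then have "i \<in> {2*n-1, 2*n-1-a} \<union> ({1..<n} - {a})" using SCsub by blast
      moreover have "2*n-1-i \<notin> {2*n-1, 2*n-1-a} \<union> ({1..<n} - {a})" if "i \<in> {2*n-1, 2*n-1-a} \<union> ({1..<n} - {a})"
        using that a n by auto
      ultimately show "2*n-1-i \<notin> SC n a c (length c - 1)" using SCsub by blast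
    qed
  qed simp

  have xL: "xL t \<in> flags n [1]" for t unfolding xL_def using lvec_flag[OF n a(1) a(4)] .

  define Orb where "Orb t = {(act_flag g (xL t), act_flag g yB, act_flag g zC) | g. g \<in> orth_group n}" for t
  have Oin: "Orb t \<in> triple_orbits n [1] b c" for t
    unfolding Orb_def triple_orbits_def using xL yB zC by blast
  have "inj Orb"
  proof
    fix s t assume st: "Orb s = Orb t"
    have "(xL t, yB, zC) \<in> Orb t" unfolding Orb_def using id_orth act_id by (metis (mono_tags, lifting) mem_Collect_eq)
    then have "(xL t, yB, zC) \<in> Orb s" using st by simp
    then obtain g where g: "g \<in> orth_group n" "act_flag g (xL s) = xL t" "act_flag g yB = yB" "act_flag g zC = zC"
      unfolding Orb_def by auto
    have lenb: "length yB = length b" "length zC = length c"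
      by (simp_all add: yB_def zC_def flag_of_def)
    have gL: "g ` fvs.span {lvec n a s} = fvs.span {lvec n a t}"
      using act_nth[OF g(2), of 0] by (simp add: xL_def)
    have yB0: "yB ! 0 = fvs.span (ev ` {..<a})" "yB ! 1 = fvs.span (ev ` {..<d})"
      using assms(8) pb0 \<open>b = b0 # b1 # br\<close> flag_of_nth[of 0 "length b" "\<lambda>j. {..<pb j}"] flag_of_nth[of 1 "length b" "\<lambda>j. {..<pb j}"]
      by (simp_all add: yB_def)
    have zC0: "zC ! 0 = fvs.span (ev ` SC n a c 0)" "zC ! 1 = fvs.span (ev ` SC n a c 1)"
      using assms(8,9) \<open>c = c0 # c1 # cr\<close> flag_of_nth[of 0 "length c" "SC n a c"] flag_of_nth[of 1 "length c" "SC n a c"]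
      by (simp_all add: zC_def)
    have gB0: "g ` fvs.span (ev ` {..<a}) = fvs.span (ev ` {..<a})"
      using act_nth[OF g(3), of 0] lenb assms(8) yB0 bne by simp
    have gB1: "g ` fvs.span (ev ` {..<d}) = fvs.span (ev ` {..<d})"
      using act_nth[OF g(3), of 1] lenb assms(8) yB0 bne by simp
    have gC0: "g ` fvs.span (ev ` SC n a c 0) = fvs.span (ev ` SC n a c 0)"
      using act_nth[OF g(4), of 0] lenb assms(8,9) zC0 bne by simp
    have gC1: "g ` fvs.span (ev ` SC n a c 1) = fvs.span (ev ` SC n a c 1)"
      using act_nth[OF g(4), of 1] lenb assms(8,9) zC0 bne by simp
    have pres: "bform n (g x) (g y) = bform n x y" if "x \<in> amb n" "y \<in> amb n" for x y
    proof -
      have "\<forall>u\<in>amb n. \<forall>v\<in>amb n. bform n (g u) (g v) = bform n u v"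
        using g(1) unfolding orth_group_def mem_Collect_eq by (elim conjE)
      then show ?thesis using that by blast
    qed
    have u: "g (ev 0) \<in> fvs.span (ev ` {..<a})"
      proof -
      have "(ev 0 :: nat \<Rightarrow> 'a) \<in> fvs.span (ev ` {..<a})" by (rule fvs.span_base) (use a in \<open>auto simp: SC_def\<close>)
      then have "g (ev 0) \<in> g ` fvs.span (ev ` {..<a})" by (rule imageI)
      then show ?thesis using gB0 by simp
    qed
    have v: "g (ev a) \<in> fvs.span (ev ` {..<d})"
      proof -
      have "(ev a :: nat \<Rightarrow> 'a) \<in> fvs.span (ev ` {..<d})" by (rule fvs.span_base) (use a in \<open>auto simp: SC_def\<close>)
      then have "g (ev a) \<in> g ` fvs.span (ev ` {..<d})" by (rule imageI)
      then show ?thesis using gB1 by simp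
    qed
    have "2*n-1 \<in> SC n a c 0" by (simp add: SC_def)
    then have w: "g (ev (2*n-1)) \<in> fvs.span (ev ` SC n a c 0)"
      proof -
      have "(ev (2*n-1) :: nat \<Rightarrow> 'a) \<in> fvs.span (ev ` SC n a c 0)" by (rule fvs.span_base) (use a in \<open>auto simp: SC_def\<close>)
      then have "g (ev (2*n-1)) \<in> g ` fvs.span (ev ` SC n a c 0)" by (rule imageI)
      then show ?thesis using gC0 by simp
    qed
    have "2*n-1-a \<in> SC n a c 1" by (simp add: SC_def)
    then have z: "g (ev (2*n-1-a)) \<in> fvs.span (ev ` SC n a c 1)"
      proof -
      have "(ev (2*n-1-a) :: nat \<Rightarrow> 'a) \<in> fvs.span (ev ` SC n a c 1)" by (rule fvs.span_base) (use a in \<open>auto simp: SC_def\<close>)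
      then have "g (ev (2*n-1-a)) \<in> g ` fvs.span (ev ` SC n a c 1)" by (rule imageI)
      then show ?thesis using gC1 by simp
    qed
    have "g (lvec n a s) \<in> fvs.span {lvec n a t}"
      proof -
      have "(lvec n a s :: nat \<Rightarrow> 'a) \<in> fvs.span ({lvec n a s})" by (rule fvs.span_base) (use a in \<open>auto simp: SC_def\<close>)
      then have "g (lvec n a s) \<in> g ` fvs.span ({lvec n a s})" by (rule imageI)
      then show ?thesis using gL by simp
    qed
    then obtain k where l: "g (lvec n a s) = fscale k (lvec n a t)"
      unfolding fvs.span_singleton by auto
    have am: "(ev 0 :: nat \<Rightarrow> 'a) \<in> amb n" "(ev a :: nat \<Rightarrow> 'a) \<in> amb n"
      "(ev (2*n-1) :: nat \<Rightarrow> 'a) \<in> amb n" "(ev (2*n-1-a) :: nat \<Rightarrow> 'a) \<in> amb n"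
      "lvec n a s \<in> amb n"
      using lvec_amb[OF n a(1) a(4)] n a by (auto intro!: ev_amb)
    note lv = lvec_vals[OF n a(1) a(4), of s]
    have ar: "2*n-1-(2*n-1) = (0::nat)" "2*n-1-(2*n-1-a) = a" "2*n-1-0 = 2*n-1" "2*n-1 < 2*n" "2*n-1-a < 2*n" "a < 2*n" "0 < 2*n"
      using n a by auto
    have evv: "ev k k = (1::'a)" "k \<noteq> j \<Longrightarrow> ev j k = (0::'a)" for j k by (auto simp: ev_def)
    show "s = t"
    proof (rule core[OF n a(1) a(2) a(3)])
      show "\<And>i. a \<le> i \<Longrightarrow> g (ev 0) i = 0" using span_ev_supp[OF u] by auto
      show "\<And>i. d \<le> i \<Longrightarrow> g (ev a) i = 0" using span_ev_supp[OF v] by auto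
      show "g (ev (2*n-1)) 0 = 0" "g (ev (2*n-1)) a = 0" "g (ev (2*n-1)) (n-1) = 0"
        "g (ev (2*n-1)) (2*n-1-a) = 0" "\<And>k. n \<le> k \<Longrightarrow> k \<noteq> 2*n-1 \<Longrightarrow> g (ev (2*n-1)) k = 0"
      proof -
        have nz: "g (ev (2*n-1)) i = 0" if "i \<notin> insert (2*n-1) ({1..<n-1} - {a})" for i
          using span_ev_supp[OF w] SC0 that by blast
        show "g (ev (2*n-1)) 0 = 0" by (rule nz) (use n a in auto)
        show "g (ev (2*n-1)) a = 0" by (rule nz) (use n a in auto)
        show "g (ev (2*n-1)) (n-1) = 0" by (rule nz) (use n a in auto)
        show "g (ev (2*n-1)) (2*n-1-a) = 0" by (rule nz) (use n a in auto)
        show "\<And>k. n \<le> k \<Longrightarrow> k \<noteq> 2*n-1 \<Longrightarrow> g (ev (2*n-1)) k = 0" by (rule nz) (use n a in auto)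
      qed
      show "g (ev (2*n-1-a)) 0 = 0" "g (ev (2*n-1-a)) a = 0" "g (ev (2*n-1-a)) (n-1) = 0"
        "\<And>k. n \<le> k \<Longrightarrow> k \<noteq> 2*n-1 \<Longrightarrow> k \<noteq> 2*n-1-a \<Longrightarrow> g (ev (2*n-1-a)) k = 0"
      proof -
        have nz: "g (ev (2*n-1-a)) i = 0" if "i \<notin> {2*n-1, 2*n-1-a} \<union> ({1..<n-1} - {a})" for i
          using span_ev_supp[OF z] SC1 that by blast
        show "g (ev (2*n-1-a)) 0 = 0" by (rule nz) (use n a in auto)
        show "g (ev (2*n-1-a)) a = 0" by (rule nz) (use n a in auto)
        show "g (ev (2*n-1-a)) (n-1) = 0" by (rule nz) (use n a in auto)
        show "\<And>k. n \<le> k \<Longrightarrow> k \<noteq> 2*n-1 \<Longrightarrow> k \<noteq> 2*n-1-a \<Longrightarrow> g (ev (2*n-1-a)) k = 0"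
          by (rule nz) (use n a in auto)
      qed
      show "g (lvec n a s) = fscale k (lvec n a t)" by (rule l)
      have "bform n (ev 0 :: nat \<Rightarrow> 'a) (ev (2*n-1)) = 1"
        using bform_ev_right[of "2*n-1" n "ev 0 :: nat \<Rightarrow> 'a"] n a lv by (simp add: ev_def)
      then show "bform n (g (ev 0)) (g (ev (2*n-1))) = 1"
        using pres[OF am(1) am(3)] by simp
      have "bform n (ev a :: nat \<Rightarrow> 'a) (ev (2*n-1)) = 0"
        using bform_ev_right[of "2*n-1" n "ev a :: nat \<Rightarrow> 'a"] n a lv by (simp add: ev_def)
      then show "bform n (g (ev a)) (g (ev (2*n-1))) = 0"
        using pres[OF am(2) am(3)] by simp
      have "bform n (ev 0 :: nat \<Rightarrow> 'a) (ev (2*n-1-a)) = 0"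
        using bform_ev_right[of "2*n-1-a" n "ev 0 :: nat \<Rightarrow> 'a"] n a lv by (simp add: ev_def)
      then show "bform n (g (ev 0)) (g (ev (2*n-1-a))) = 0"
        using pres[OF am(1) am(4)] by simp
      have "bform n (ev a :: nat \<Rightarrow> 'a) (ev (2*n-1-a)) = 1"
        using bform_ev_right[of "2*n-1-a" n "ev a :: nat \<Rightarrow> 'a"] n a lv by (simp add: ev_def)
      then show "bform n (g (ev a)) (g (ev (2*n-1-a))) = 1"
        using pres[OF am(2) am(4)] by simp
      have "bform n (lvec n a s :: nat \<Rightarrow> 'a) (ev (a)) = 1"
        using bform_ev_right[of "a" n "lvec n a s :: nat \<Rightarrow> 'a"] n a lv by (simp add: ev_def)
      then have l1: "bform n (g (lvec n a s)) (g (ev (a))) = 1"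
        using pres[OF am(5) am(2)] by simp
      have "bform n (lvec n a s :: nat \<Rightarrow> 'a) (ev (2*n-1-a)) = 1"
        using bform_ev_right[of "2*n-1-a" n "lvec n a s :: nat \<Rightarrow> 'a"] n a lv by (simp add: ev_def)
      then have l2: "bform n (g (lvec n a s)) (g (ev (2*n-1-a))) = 1"
        using pres[OF am(5) am(4)] by simp
      have "bform n (lvec n a s :: nat \<Rightarrow> 'a) (ev (0)) = 1"
        using bform_ev_right[of "0" n "lvec n a s :: nat \<Rightarrow> 'a"] n a lv by (simp add: ev_def)
      then have l3: "bform n (g (lvec n a s)) (g (ev (0))) = 1"
        using pres[OF am(5) am(1)] by simp
      have "bform n (lvec n a s :: nat \<Rightarrow> 'a) (ev (2*n-1)) = s"
        using bform_ev_right[of "2*n-1" n "lvec n a s :: nat \<Rightarrow> 'a"] n a lv by (simp add: ev_def)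
      then have l4: "bform n (g (lvec n a s)) (g (ev (2*n-1))) = s"
        using pres[OF am(5) am(3)] by simp
      show "bform n (g (lvec n a s)) (g (ev a)) * bform n (g (lvec n a s)) (g (ev (2*n-1-a))) \<noteq> 0"
        using l1 l2 by simp
      show "bform n (g (lvec n a s)) (g (ev 0)) * bform n (g (lvec n a s)) (g (ev (2*n-1))) =
          s * (bform n (g (lvec n a s)) (g (ev a)) * bform n (g (lvec n a s)) (g (ev (2*n-1-a))))"
        using l1 l2 l3 l4 by simp
    qed
  qed
  moreover have "range Orb \<subseteq> triple_orbits n [1] b c" using Oin by auto
  ultimately have "finite (UNIV :: 'a set)"
    using assms(10) finite_subset finite_imageD by (metis inj_on_subset subset_UNIV)
  then show False using assms(1) by simp
qed

end
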